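(* Let $E$ be a finite-dimensional real vector space ordered by a closed proper cone $C$, fix a norm $\|\cdot\|$ on $E$, let $0<T\leq\infty$, and let $U\subset E$ be a nonempty convex open set. Let $f\colon[0,T)\times U\to E$ be a continuous map such that $f(t,\cdot)$ is convex on $U$ for every $t\in[0,T)$. Then $f$ is locally Lipschitz, i.e. for every compact $K\subset U$ and every $t\in[0,T)$, $$L_{t,K}(f)=\sup_{0\leq\tau\leq t,\;x_1,x_2\in K,\;x_1\neq x_2}\frac{\|f(\tau,x_2)-f(\tau,x_1)\|}{\|x_2-x_1\|}<\infty.$$
   Context: A cone $C$ ($\lambda C\subset C$ for $\lambda>0$) is proper if $C+C\subset C$ and $C\cap(-C)=\{0\}$; it induces the partial order $x\leq y$ iff $y-x\in C$. A map $g\colon D\to E$ is convex if $D$ is convex and $g(\lambda x+(1-\lambda)y)\leq\lambda g(x)+(1-\lambda)g(y)$ (in the order induced by $C$) for all $x,y\in D$, $\lambda\in[0,1]$. *)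

theory Defs
  imports "HOL-Analysis.Analysis"
begin

definition pos_cone :: "'a::real_vector set \<Rightarrow> bool" where
  "pos_cone C \<longleftrightarrow> (\<forall>c::real. \<forall>x\<in>C. c > 0 \<longrightarrow> c *\<^sub>R x \<in> C)"

definition proper_cone :: "'a::real_vector set \<Rightarrow> bool" where
  "proper_cone C \<longleftrightarrow> pos_cone C \<and> (\<forall>x\<in>C. \<forall>y\<in>C. x + y \<in> C)
      \<and> C \<inter> uminus ` C = {0}"

definition cone_le :: "'a::real_vector set \<Rightarrow> 'a \<Rightarrow> 'a \<Rightarrow> bool" where
  "cone_le C x y \<longleftrightarrow> y - x \<in> C"

definition cone_convex_on :: "'e::real_vector set \<Rightarrow> 'd::real_vector set \<Rightarrow> ('d \<Rightarrow> 'e) \<Rightarrow> bool" where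
  "cone_convex_on C D g \<longleftrightarrow> convex D \<and>
     (\<forall>x\<in>D. \<forall>y\<in>D. \<forall>c::real. 0 \<le> c \<and> c \<le> 1 \<longrightarrow>
        cone_le C (g (c *\<^sub>R x + (1 - c) *\<^sub>R y)) (c *\<^sub>R g x + (1 - c) *\<^sub>R g y))"

end

theory Submission
  imports Defs
begin

lemma fd_compact_cball:
  fixes B0 :: "'a::real_normed_vector set"
  assumes fB0: "finite B0" and sB0: "span B0 = UNIV"
  shows "compact (cball (0::'a) r)"
proof -
  obtain B where BB0: "B \<subseteq> B0" and indB: "independent B" and B0B: "B0 \<subseteq> span B"
    by (rule maximal_independent_subset)
  have fB: "finite B" using BB0 fB0 finite_subset by blast
  have spB: "span B = UNIV"
    using sB0 B0B by (metis span_mono span_span top.extremum_uniqueI)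
  show ?thesis
  proof (cases "B = {}")
    case True
    then have "UNIV = {0::'a}" using spB by simp
    then have "cball (0::'a) r \<subseteq> {0}" by blast
    then have "finite (cball (0::'a) r)" using finite_subset by blast
    then show ?thesis by (rule finite_imp_compact)
  next
    case Bne: False
    define E where "E = PiE B (\<lambda>_. {-1,1::real})"
    define G where "G = (\<lambda>\<epsilon> b. (\<epsilon> b::real) *\<^sub>R (b::'a))"
    define F where "F = (\<Union>\<epsilon>\<in>E. convex hull (G \<epsilon> ` B))"
    have fE: "finite E" unfolding E_def using fB by (intro finite_PiE) auto
    have cF: "compact F" unfolding F_def
      using fE fB by (intro compact_UN finite_imp_compact_convex_hull) auto
    have Eval: "\<epsilon> b = 1 \<or> \<epsilon> b = -1" if "\<epsilon> \<in> E" "b \<in> B" for \<epsilon> b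
      using that unfolding E_def by auto
    have F0: "0 \<notin> F"
    proof
      assume "0 \<in> F"
      then obtain \<epsilon> where eE: "\<epsilon> \<in> E" and h: "0 \<in> convex hull (G \<epsilon> ` B)"
        unfolding F_def by blast
      have inj: "inj_on (G \<epsilon>) B"
      proof (rule inj_onI, rule ccontr)
        fix b c assume b: "b \<in> B" and c: "c \<in> B" and eq: "G \<epsilon> b = G \<epsilon> c" and ne: "b \<noteq> c"
        have "b = (\<epsilon> c / \<epsilon> b) *\<^sub>R c"
          using eq Eval[OF eE b] Eval[OF eE c] unfolding G_def by auto
        moreover have "(\<epsilon> c / \<epsilon> b) *\<^sub>R c \<in> span (B - {b})"
          using c ne by (intro span_mul span_base) auto
        ultimately have "dependent B" unfolding dependent_def using b by metis
        then show False using indB by simp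
      qed
      from h obtain u where u0: "\<forall>x\<in>G \<epsilon> ` B. 0 \<le> u x" and u1: "sum u (G \<epsilon> ` B) = 1"
        and us: "(\<Sum>x\<in>G \<epsilon> ` B. u x *\<^sub>R x) = 0"
        using convex_hull_finite[of "G \<epsilon> ` B"] fB by auto
      have "(\<Sum>b\<in>B. (u (G \<epsilon> b) * \<epsilon> b) *\<^sub>R b) = 0"
        using us unfolding sum.reindex[OF inj] by (simp add: G_def)
      then have "\<forall>b\<in>B. u (G \<epsilon> b) * \<epsilon> b = 0"
      proof -
        have "\<forall>c. (\<Sum>v\<in>B. c v *\<^sub>R v) = 0 \<longrightarrow> (\<forall>v\<in>B. c v = 0)"
          using indB dependent_finite[OF fB] by blast
        from this[rule_format, of "\<lambda>b. u (G \<epsilon> b) * \<epsilon> b"] show ?thesis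
          using \<open>(\<Sum>b\<in>B. (u (G \<epsilon> b) * \<epsilon> b) *\<^sub>R b) = 0\<close> by simp
      qed
      then have "\<forall>b\<in>B. u (G \<epsilon> b) = 0" using Eval[OF eE] by fastforce
      then have "sum u (G \<epsilon> ` B) = 0" unfolding sum.reindex[OF inj] by simp
      then show False using u1 by simp
    qed
    obtain b0 where b0: "b0 \<in> B" using Bne by blast
    define \<epsilon>0 where "\<epsilon>0 = restrict (\<lambda>_. 1::real) B"
    have "\<epsilon>0 \<in> E" unfolding E_def \<epsilon>0_def by auto
    moreover have "G \<epsilon>0 b0 \<in> convex hull (G \<epsilon>0 ` B)" using b0 by (intro hull_inc) auto
    ultimately have Fne: "F \<noteq> {}" unfolding F_def by blast
    obtain y0 where y0F: "y0 \<in> F" and y0min: "\<forall>y\<in>F. norm y0 \<le> norm y"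
      using continuous_attains_inf[OF cF Fne continuous_on_norm[OF continuous_on_id]] by auto
    define m where "m = norm y0"
    have mpos: "m > 0" unfolding m_def using y0F F0 by auto
    have rep: "\<exists>s y. 0 \<le> s \<and> s \<le> norm x / m \<and> y \<in> F \<and> x = s *\<^sub>R y" for x
    proof (cases "x = 0")
      case True then show ?thesis using y0F by auto
    next
      case xne: False
      obtain a where xa: "x = (\<Sum>b\<in>B. a b *\<^sub>R b)"
        using spB span_finite[OF fB] by (metis (no_types, lifting) UNIV_I image_iff)
      define s where "s = (\<Sum>b\<in>B. \<bar>a b\<bar>)"
      have s0: "s \<ge> 0" unfolding s_def by (simp add: sum_nonneg)
      have "s \<noteq> 0"
      proof
        assume "s = 0"
        then have "\<forall>b\<in>B. \<bar>a b\<bar> = 0" unfolding s_def using fB by (simp add: sum_nonneg_eq_0_iff)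
        then have "x = 0" unfolding xa by simp
        then show False using xne by simp
      qed
      then have spos: "s > 0" using s0 by simp
      define \<epsilon> where "\<epsilon> = restrict (\<lambda>b. if a b \<ge> 0 then 1 else -1::real) B"
      have eE: "\<epsilon> \<in> E" unfolding E_def \<epsilon>_def by auto
      have ae: "\<bar>a b\<bar> * \<epsilon> b = a b" if "b \<in> B" for b
        using that unfolding \<epsilon>_def by auto
      define y where "y = x /\<^sub>R s"
      have ysum: "y = (\<Sum>b\<in>B. (\<bar>a b\<bar> / s) *\<^sub>R G \<epsilon> b)"
      proof -
        have "(\<Sum>b\<in>B. (\<bar>a b\<bar> / s) *\<^sub>R G \<epsilon> b) = (\<Sum>b\<in>B. (1/s) *\<^sub>R (a b *\<^sub>R b))"
          using ae by (intro sum.cong) (auto simp: G_def)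
        also have "\<dots> = x /\<^sub>R s" unfolding xa scaleR_sum_right by (simp add: divide_inverse_commute)
        finally show ?thesis unfolding y_def by simp
      qed
      have "y \<in> convex hull (G \<epsilon> ` B)"
        unfolding ysum
      proof (rule convex_sum[OF fB convex_convex_hull])
        show "(\<Sum>b\<in>B. \<bar>a b\<bar> / s) = 1" using spos unfolding s_def by (simp add: sum_divide_distrib[symmetric])
        show "\<And>i. i \<in> B \<Longrightarrow> 0 \<le> \<bar>a i\<bar> / s" using spos by simp
        show "\<And>i. i \<in> B \<Longrightarrow> G \<epsilon> i \<in> convex hull (G \<epsilon> ` B)" by (intro hull_inc) auto
      qed
      then have yF: "y \<in> F" unfolding F_def using eE by blast
      then have "m \<le> norm y" using y0min unfolding m_def by blast
      also have "norm y = norm x / s" unfolding y_def using spos by (simp add: field_simps)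
      finally have "m \<le> norm x / s" .
      then have "m * s \<le> norm x" using spos by (simp add: le_divide_eq)
      then have "s \<le> norm x / m" using mpos by (simp add: le_divide_eq mult.commute)
      moreover have "x = s *\<^sub>R y" unfolding y_def using spos by (simp add: field_simps)
      ultimately show ?thesis using s0 yF by blast
    qed
    define H where "H = (\<lambda>p. fst p *\<^sub>R snd p) ` ({0..r/m} \<times> F)"
    have cH: "compact H" unfolding H_def
      by (intro compact_continuous_image compact_Times cF compact_Icc continuous_intros)
    have "cball 0 r \<subseteq> H"
    proof
      fix x :: 'a assume "x \<in> cball 0 r"
      then have nx: "norm x \<le> r" by simp
      obtain s y where "0 \<le> s" "s \<le> norm x / m" "y \<in> F" "x = s *\<^sub>R y" using rep by blast
      moreover have "norm x / m \<le> r / m" using nx mpos by (simp add: divide_right_mono)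
      ultimately show "x \<in> H" unfolding H_def by (intro image_eqI[of _ _ "(s,y)"]) auto
    qed
    then have eq: "cball 0 r \<inter> H = cball 0 r" by blast
    show ?thesis using closed_Int_compact[OF closed_cball cH, of 0 r] unfolding eq .
  qed
qed

lemma fd_compact:
  fixes B0 :: "'a::real_normed_vector set"
  assumes "finite B0" "span B0 = UNIV" "bounded S" "closed (S::'a set)"
  shows "compact S"
proof -
  obtain e x where "S \<subseteq> cball x e" "0 \<le> e" using assms(3) bounded_subset_cball by blast
  moreover have "cball x e \<subseteq> cball 0 (norm x + e)"
  proof
    fix y assume "y \<in> cball x e"
    then have "norm (y - x) \<le> e" by (simp add: dist_norm norm_minus_commute)
    moreover have "norm y \<le> norm x + norm (y - x)" using norm_triangle_sub[of y x] by simp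
    ultimately show "y \<in> cball 0 (norm x + e)" by simp
  qed
  ultimately have eq: "S \<inter> cball 0 (norm x + e) = S" by blast
  show ?thesis using closed_Int_compact[OF assms(4) fd_compact_cball[OF assms(1,2)], of "norm x + e"] unfolding eq .
qed


lemma cone_normal:
  fixes C :: "'a::real_normed_vector set" and B0 :: "'a set"
  assumes fin: "finite B0" "span B0 = UNIV" and Ccl: "closed C" and Cp: "proper_cone C"
  obtains m where "m > 0" "\<forall>c\<in>C. \<forall>d\<in>C. m * norm c \<le> norm (c + d)"
proof -
  have C0: "0 \<in> C" using Cp unfolding proper_cone_def by blast
  have pos: "k *\<^sub>R c \<in> C" if "c \<in> C" "k > 0" for c k
    using Cp that unfolding proper_cone_def pos_cone_def by blast
  have neg: "c = 0" if "c \<in> C" "-c \<in> C" for c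
  proof -
    have "c \<in> uminus ` C" using that(2) by (metis image_eqI minus_minus)
    then have "c \<in> C \<inter> uminus ` C" using that(1) by blast
    then show ?thesis using Cp unfolding proper_cone_def by blast
  qed
  define S where "S = C \<inter> sphere 0 1"
  have cS: "compact S" unfolding S_def
  proof (rule fd_compact[OF fin])
    show "bounded (C \<inter> sphere 0 1)" by (meson bounded_Int bounded_cball bounded_subset sphere_cball)
    have "sphere (0::'a) 1 = cball 0 1 - ball 0 1" by auto
    then have "closed (sphere (0::'a) 1)" by (simp add: closed_Diff)
    then show "closed (C \<inter> sphere 0 1)" using Ccl by (intro closed_Int)
  qed
  show ?thesis
  proof (cases "S = {}")
    case True
    have "c = 0" if "c \<in> C" for c
    proof (rule ccontr)
      assume "c \<noteq> 0"
      then have "(1 / norm c) *\<^sub>R c \<in> S" unfolding S_def using pos[OF that, of "1/norm c"] by auto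
      then show False using True by blast
    qed
    then have "\<forall>c\<in>C. \<forall>d\<in>C. 1 * norm c \<le> norm (c + d)" by (metis mult_1 norm_ge_zero norm_zero)
    then show ?thesis using that[of 1] by simp
  next
    case False
    have cont: "continuous_on S (\<lambda>c. infdist (- c) C)"
      by (intro continuous_intros)
    obtain c0 where c0S: "c0 \<in> S" and c0min: "\<forall>c\<in>S. infdist (- c0) C \<le> infdist (- c) C"
      using continuous_attains_inf[OF cS False cont] by blast
    define m where "m = infdist (- c0) C"
    have "m \<noteq> 0"
    proof
      assume "m = 0"
      then have "- c0 \<in> C" unfolding m_def using in_closed_iff_infdist_zero[OF Ccl] C0 by blast
      then have "c0 = 0" using neg c0S unfolding S_def by blast
      then show False using c0S unfolding S_def by simp
    qed
    then have mpos: "m > 0" unfolding m_def using infdist_nonneg by (metis less_eq_real_def)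
    have "m * norm c \<le> norm (c + d)" if c: "c \<in> C" and d: "d \<in> C" for c d
    proof (cases "c = 0")
      case True then show ?thesis by simp
    next
      case False
      let ?k = "1 / norm c"
      have kpos: "?k > 0" using False by simp
      have "?k *\<^sub>R c \<in> S" unfolding S_def using pos[OF c kpos] False by auto
      then have "m \<le> infdist (- (?k *\<^sub>R c)) C" using c0min unfolding m_def by blast
      also have "\<dots> \<le> dist (- (?k *\<^sub>R c)) (?k *\<^sub>R d)" using pos[OF d kpos] by (rule infdist_le)
      also have "\<dots> = norm (?k *\<^sub>R (c + d))"
        by (simp add: dist_norm scaleR_right_distrib norm_minus_commute add.commute)
      also have "\<dots> = norm (c + d) / norm c" by simp
      finally have "m \<le> norm (c + d) / norm c" .
      then show ?thesis using False by (simp add: le_divide_eq)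
    qed
    then show ?thesis using that[OF mpos] by blast
  qed
qed

lemma key_estimate:
  fixes C :: "'a::real_normed_vector set" and g :: "'a \<Rightarrow> 'a"
  assumes mpos: "m > 0" and normal: "\<forall>c\<in>C. \<forall>d\<in>C. m * norm c \<le> norm (c + d)"
    and conv: "cone_convex_on C U g"
    and dpos: "\<delta> > 0" and x1: "x1 \<in> U" and x2: "x2 \<in> U" and ne: "x1 \<noteq> x2"
    and z: "x2 + (\<delta> / norm (x2 - x1)) *\<^sub>R (x2 - x1) \<in> U"
    and w: "x1 - (\<delta> / norm (x2 - x1)) *\<^sub>R (x2 - x1) \<in> U"
    and bd: "\<And>y. y \<in> {x1, x2, x2 + (\<delta> / norm (x2 - x1)) *\<^sub>R (x2 - x1),
                  x1 - (\<delta> / norm (x2 - x1)) *\<^sub>R (x2 - x1)} \<Longrightarrow> norm (g y) \<le> M"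
  shows "norm (g x2 - g x1) / norm (x2 - x1) \<le> (4 * M / m + 2 * M) / \<delta>"
proof -
  define d where "d = norm (x2 - x1)"
  have dp: "d > 0" unfolding d_def using ne by simp
  define zz where "zz = x2 + (\<delta> / d) *\<^sub>R (x2 - x1)"
  define ww where "ww = x1 - (\<delta> / d) *\<^sub>R (x2 - x1)"
  define l where "l = d / (d + \<delta>)"
  have l01: "0 \<le> l" "l \<le> 1" unfolding l_def using dp dpos by auto
  have c1: "l * (\<delta> / d) = 1 - l" unfolding l_def using dp dpos by (simp add: field_simps)
  have eq1: "l *\<^sub>R zz + (1 - l) *\<^sub>R x1 = x2"
  proof -
    have "l *\<^sub>R zz + (1 - l) *\<^sub>R x1 = l *\<^sub>R x2 + (l * (\<delta> / d)) *\<^sub>R (x2 - x1) + (1 - l) *\<^sub>R x1"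
      unfolding zz_def by (simp add: scaleR_right_distrib)
    also have "\<dots> = x2" unfolding c1 by (simp add: algebra_simps)
    finally show ?thesis .
  qed
  have eq2: "l *\<^sub>R ww + (1 - l) *\<^sub>R x2 = x1"
  proof -
    have "l *\<^sub>R ww + (1 - l) *\<^sub>R x2 = l *\<^sub>R x1 - (l * (\<delta> / d)) *\<^sub>R (x2 - x1) + (1 - l) *\<^sub>R x2"
      unfolding ww_def by (simp add: scaleR_right_diff_distrib)
    also have "\<dots> = x1" unfolding c1 by (simp add: algebra_simps)
    finally show ?thesis .
  qed
  have zU: "zz \<in> U" and wU: "ww \<in> U" using z w unfolding zz_def ww_def d_def by auto
  have convD: "\<And>x y c. x \<in> U \<Longrightarrow> y \<in> U \<Longrightarrow> 0 \<le> c \<Longrightarrow> c \<le> 1 \<Longrightarrow>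
      c *\<^sub>R g x + (1 - c) *\<^sub>R g y - g (c *\<^sub>R x + (1 - c) *\<^sub>R y) \<in> C"
    using conv unfolding cone_convex_on_def cone_le_def by blast
  have h1: "l *\<^sub>R g zz + (1 - l) *\<^sub>R g x1 - g x2 \<in> C"
    using convD[OF zU x1 l01] unfolding eq1 .
  have h2: "l *\<^sub>R g ww + (1 - l) *\<^sub>R g x2 - g x1 \<in> C"
    using convD[OF wU x2 l01] unfolding eq2 .
  define v where "v = g x2 - g x1"
  define a where "a = l *\<^sub>R (g ww - g x2)"
  define b where "b = l *\<^sub>R (g zz - g x1)"
  have bv: "b - v \<in> C" using h1 unfolding b_def v_def by (simp add: algebra_simps)
  have va: "v + a \<in> C" using h2 unfolding a_def v_def by (simp add: algebra_simps)
  have "m * norm (v + a) \<le> norm ((v + a) + (b - v))" using normal va bv by blast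
  also have "(v + a) + (b - v) = a + b" by simp
  finally have n1: "m * norm (v + a) \<le> norm (a + b)" .
  have bdz: "norm (g zz) \<le> M" "norm (g ww) \<le> M" "norm (g x1) \<le> M" "norm (g x2) \<le> M"
    using bd unfolding zz_def ww_def d_def by auto
  have na: "norm a \<le> l * (2 * M)"
  proof -
    have "norm (g ww - g x2) \<le> 2 * M" using norm_triangle_ineq4[of "g ww" "g x2"] bdz by simp
    then show ?thesis unfolding a_def using l01 by (simp add: mult_left_mono)
  qed
  have nb: "norm b \<le> l * (2 * M)"
  proof -
    have "norm (g zz - g x1) \<le> 2 * M" using norm_triangle_ineq4[of "g zz" "g x1"] bdz by simp
    then show ?thesis unfolding b_def using l01 by (simp add: mult_left_mono)
  qed
  have M0: "M \<ge> 0" using bdz(3) norm_ge_zero order_trans by blast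
  have "norm v \<le> norm (v + a) + norm a" using norm_triangle_ineq4[of "v + a" a] by simp
  also have "norm (v + a) \<le> norm (a + b) / m" using n1 mpos by (simp add: le_divide_eq mult.commute)
  hence "norm (v + a) + norm a \<le> norm (a + b) / m + norm a" by simp
  finally have "norm v \<le> (norm a + norm b) / m + norm a"
    using norm_triangle_ineq[of a b] mpos by (smt (verit) divide_right_mono)
  also have "\<dots> \<le> (l * (2 * M) + l * (2 * M)) / m + l * (2 * M)"
    using na nb mpos by (intro add_mono divide_right_mono) auto
  also have "\<dots> = l * (4 * M / m + 2 * M)" by (simp add: field_simps)
  also have "\<dots> \<le> (d / \<delta>) * (4 * M / m + 2 * M)"
  proof (rule mult_right_mono)
    show "l \<le> d / \<delta>" unfolding l_def using dp dpos by (simp add: frac_le)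
    show "0 \<le> 4 * M / m + 2 * M" using M0 mpos by simp
  qed
  finally have "norm v \<le> d / \<delta> * (4 * M / m + 2 * M)" .
  then show ?thesis unfolding v_def d_def[symmetric] using dp dpos
    by (simp add: divide_le_eq field_simps)
qed


theorem mainTheorem2:
  fixes C :: "'a::real_normed_vector set"
    and T :: ereal
    and U :: "'a set"
    and f :: "real \<Rightarrow> 'a \<Rightarrow> 'a"
  assumes fin_dim: "\<exists>B::'a set. finite B \<and> span B = UNIV"
    and C_closed: "closed C"
    and C_proper: "proper_cone C"
    and T_pos: "0 < T"
    and U_ne: "U \<noteq> {}"
    and U_convex: "convex U"
    and U_open: "open U"
    and f_cont: "continuous_on ({t. 0 \<le> t \<and> ereal t < T} \<times> U) (\<lambda>(t, x). f t x)"
    and f_convex: "\<And>t. 0 \<le> t \<Longrightarrow> ereal t < T \<Longrightarrow> cone_convex_on C U (f t)"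
  shows "\<forall>K t. compact K \<and> K \<subseteq> U \<and> 0 \<le> t \<and> ereal t < T \<longrightarrow>
           bdd_above {norm (f \<tau> x2 - f \<tau> x1) / norm (x2 - x1) | \<tau> x1 x2.
                        0 \<le> \<tau> \<and> \<tau> \<le> t \<and> x1 \<in> K \<and> x2 \<in> K \<and> x1 \<noteq> x2}"
proof (intro allI impI, elim conjE)
  fix K t assume cK: "compact K" and KU: "K \<subseteq> U" and t0: "0 \<le> t" and tT: "ereal t < T"
  obtain B0 :: "'a set" where fB0: "finite B0" and sB0: "span B0 = UNIV" using fin_dim by blast
  obtain m where mpos: "m > 0" and normal: "\<forall>c\<in>C. \<forall>d\<in>C. m * norm c \<le> norm (c + d)"
    using cone_normal[OF fB0 sB0 C_closed C_proper] by blast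
  obtain \<delta> where dpos: "\<delta> > 0" and dU: "(\<Union>x\<in>K. cball x \<delta>) \<subseteq> U"
    using compact_subset_open_imp_cball_epsilon_subset[OF cK U_open KU] by blast
  define K2 where "K2 = (\<Union>x\<in>K. \<Union>y\<in>cball 0 \<delta>. {x + y})"
  have cK2: "compact K2" unfolding K2_def by (rule compact_sums'[OF cK fd_compact_cball[OF fB0 sB0]])
  have inK2: "x + y \<in> K2" if "x \<in> K" "norm y \<le> \<delta>" for x y
  proof -
    have "y \<in> cball 0 \<delta>" using that(2) by simp
    then show ?thesis unfolding K2_def using that(1) by blast
  qed
  have K2U: "K2 \<subseteq> U"
  proof
    fix p assume "p \<in> K2"
    then obtain x y where x: "x \<in> K" and y: "norm y \<le> \<delta>" and p: "p = x + y"
      unfolding K2_def by auto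
    have "p \<in> cball x \<delta>" using y p by (simp add: dist_norm)
    then show "p \<in> U" using dU x by blast
  qed
  define D where "D = {0..t} \<times> K2"
  have DS: "D \<subseteq> {t. 0 \<le> t \<and> ereal t < T} \<times> U"
  proof
    fix p assume "p \<in> D"
    then obtain \<tau> x where p: "p = (\<tau>, x)" and "0 \<le> \<tau>" "\<tau> \<le> t" "x \<in> K2" unfolding D_def by auto
    moreover have "ereal \<tau> < T" using \<open>\<tau> \<le> t\<close> tT by (meson ereal_less_eq(3) order_le_less_trans)
    ultimately show "p \<in> {t. 0 \<le> t \<and> ereal t < T} \<times> U" using K2U by auto
  qed
  have "compact ((\<lambda>(t, x). f t x) ` D)" unfolding D_def
    by (intro compact_continuous_image continuous_on_subset[OF f_cont DS[unfolded D_def]]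
        compact_Times compact_Icc cK2)
  then obtain M where M: "\<forall>q\<in>(\<lambda>(t, x). f t x) ` D. norm q \<le> M"
    using compact_imp_bounded bounded_iff by metis
  have fb: "norm (f \<tau> y) \<le> M" if "0 \<le> \<tau>" "\<tau> \<le> t" "y \<in> K2" for \<tau> y
  proof -
    have "(\<tau>, y) \<in> D" unfolding D_def using that by auto
    then show ?thesis using M by force
  qed
  show "bdd_above {norm (f \<tau> x2 - f \<tau> x1) / norm (x2 - x1) | \<tau> x1 x2.
                        0 \<le> \<tau> \<and> \<tau> \<le> t \<and> x1 \<in> K \<and> x2 \<in> K \<and> x1 \<noteq> x2}"
  proof (rule bdd_aboveI[where M="(4 * M / m + 2 * M) / \<delta>"])
    fix r assume "r \<in> {norm (f \<tau> x2 - f \<tau> x1) / norm (x2 - x1) | \<tau> x1 x2.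
                        0 \<le> \<tau> \<and> \<tau> \<le> t \<and> x1 \<in> K \<and> x2 \<in> K \<and> x1 \<noteq> x2}"
    then obtain \<tau> x1 x2 where r: "r = norm (f \<tau> x2 - f \<tau> x1) / norm (x2 - x1)"
      and \<tau>0: "0 \<le> \<tau>" and \<tau>t: "\<tau> \<le> t" and x1: "x1 \<in> K" and x2: "x2 \<in> K" and ne: "x1 \<noteq> x2"
      by blast
    have \<tau>T: "ereal \<tau> < T" using \<tau>t tT by (meson ereal_less_eq(3) order_le_less_trans)
    have conv: "cone_convex_on C U (f \<tau>)" by (rule f_convex[OF \<tau>0 \<tau>T])
    define v where "v = (\<delta> / norm (x2 - x1)) *\<^sub>R (x2 - x1)"
    have nv: "norm v = \<delta>" unfolding v_def using ne dpos by simp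
    have nmv: "norm (- v) \<le> \<delta>" using nv by simp
    have x1K2: "x1 \<in> K2" using inK2[OF x1, of 0] dpos by simp
    have x2K2: "x2 \<in> K2" using inK2[OF x2, of 0] dpos by simp
    have zK2: "x2 + v \<in> K2" using inK2[OF x2] nv by simp
    have wK2: "x1 - v \<in> K2" using inK2[OF x1 nmv] by simp
    show "r \<le> (4 * M / m + 2 * M) / \<delta>" unfolding r
    proof (rule key_estimate[OF mpos normal conv dpos])
      show "x1 \<in> U" "x2 \<in> U" using x1K2 x2K2 K2U by auto
      show "x1 \<noteq> x2" by (rule ne)
      show "x2 + (\<delta> / norm (x2 - x1)) *\<^sub>R (x2 - x1) \<in> U" using zK2 K2U unfolding v_def by auto
      show "x1 - (\<delta> / norm (x2 - x1)) *\<^sub>R (x2 - x1) \<in> U" using wK2 K2U unfolding v_def by auto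
      fix y assume "y \<in> {x1, x2, x2 + (\<delta> / norm (x2 - x1)) *\<^sub>R (x2 - x1),
                  x1 - (\<delta> / norm (x2 - x1)) *\<^sub>R (x2 - x1)}"
      then have "y \<in> K2" using x1K2 x2K2 zK2 wK2 unfolding v_def by auto
      then show "norm (f \<tau> y) \<le> M" using fb \<tau>0 \<tau>t by blast
    qed
  qed
qed

end
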